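(* Consider the linear model $\mathbf{y}=\alpha\mathbf{1}_n+\mathbf{X}\boldsymbol{\beta}+\sigma\boldsymbol{\epsilon}$, where the error vector $\boldsymbol{\epsilon}$ has a spherically symmetric density $f(\boldsymbol{\epsilon}'\boldsymbol{\epsilon})$ on $\mathbb{R}^n$ with $E[\boldsymbol{\epsilon}]=\mathbf{0}_n$ and $\mathrm{Var}[\boldsymbol{\epsilon}]=\mathbf{I}_n$. Let $\pi(\alpha,\boldsymbol{\beta})$ be a nonnegative (possibly improper) prior density on $(\alpha,\boldsymbol{\beta})\in\mathbb{R}\times\mathbb{R}^p$ and consider the joint (generalized) prior $\pi(\alpha,\boldsymbol{\beta},\sigma^2)=\pi(\alpha,\boldsymbol{\beta})\{\sigma^2\}^{-1}$. Then the generalized Bayes estimator of $\sigma^2$ with respect to this prior under Stein's loss $L_S(\delta,\sigma^2)=\delta/\sigma^2-\log(\delta/\sigma^2)-1$ does not depend on the particular spherically symmetric density $f$; in particular it coincides with the generalized Bayes estimator obtained when $\boldsymbol{\epsilon}\sim N_n(\mathbf{0}_n,\mathbf{I}_n)$.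
   Context: Here $\mathbf{y}\in\mathbb{R}^n$ is observed, $\alpha\in\mathbb{R}$ is an unknown intercept, $\mathbf{1}_n$ is the $n$-vector of ones, $\mathbf{X}=(\mathbf{x}_1,\dots,\mathbf{x}_p)$ is a known $n\times p$ design matrix whose columns are centered ($\mathbf{x}_i'\mathbf{1}_n=0$) and linearly independent (rank $p$), $n>p+1$, $\boldsymbol{\beta}\in\mathbb{R}^p$ is unknown, and $\sigma>0$ is unknown. The generalized Bayes estimator under Stein's loss is the estimator minimizing the (generalized) posterior expected loss, namely $\{E[1/\sigma^2\mid\mathbf{y}]\}^{-1}$, where the posterior is formed from the likelihood $\sigma^{-n}f(\|\mathbf{y}-\alpha\mathbf{1}_n-\mathbf{X}\boldsymbol{\beta}\|^2/\sigma^2)$ and the given prior (assumed to yield finite posterior quantities). *)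

theory Defs
  imports "HOL-Analysis.Analysis"
begin

definition spherical_error_density :: "(real \<Rightarrow> real) \<Rightarrow> ('n::finite) itself \<Rightarrow> bool" where
  "spherical_error_density f TYPE('n) \<longleftrightarrow>
     f \<in> borel_measurable borel \<and>
     (\<forall>t\<ge>0. 0 \<le> f t) \<and>
     integrable lborel (\<lambda>e::real^'n. f (e \<bullet> e)) \<and>
     (\<integral>e. f (e \<bullet> e) \<partial>(lborel :: (real^'n) measure)) = 1 \<and>
     integrable lborel (\<lambda>e::real^'n. f (e \<bullet> e) *\<^sub>R e) \<and>
     (\<integral>e. f (e \<bullet> e) *\<^sub>R e \<partial>(lborel :: (real^'n) measure)) = 0 \<and>
     (\<forall>i j. integrable lborel (\<lambda>e::real^'n. e $ i * e $ j * f (e \<bullet> e)) \<and>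
            (\<integral>e. e $ i * e $ j * f (e \<bullet> e) \<partial>(lborel :: (real^'n) measure))
              = (if i = j then 1 else 0))"

definition normal_generator :: "('n::finite) itself \<Rightarrow> real \<Rightarrow> real" where
  "normal_generator _ t = (2 * pi) powr (- real CARD('n) / 2) * exp (- t / 2)"

text \<open>Unnormalised generalized posterior density of (alpha, beta, s) with s = sigma^2:
  likelihood sigma^(-n) f(||y - alpha 1 - X beta||^2 / sigma^2) times prior
  pi(alpha, beta) (sigma^2)^(-1), w.r.t. Lebesgue measure d alpha d beta d sigma^2 on
  R x R^p x (0, infinity); it is set to 0 for s \<le> 0.\<close>
definition post_kernel ::
  "(real \<Rightarrow> real) \<Rightarrow> (real \<Rightarrow> real^'p \<Rightarrow> real) \<Rightarrow> real^'n \<Rightarrow> real^'p^'n::finite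
     \<Rightarrow> real \<times> (real^'p::finite) \<times> real \<Rightarrow> real" where
  "post_kernel f pr y X = (\<lambda>(a, b, s).
     if 0 < s then
       s powr (- real CARD('n) / 2) * f ((norm (y - a *\<^sub>R vec 1 - X *v b))\<^sup>2 / s) * pr a b * (1 / s)
     else 0)"

definition finite_posterior ::
  "(real \<Rightarrow> real) \<Rightarrow> (real \<Rightarrow> real^'p \<Rightarrow> real) \<Rightarrow> real^'n \<Rightarrow> real^'p^'n::finite \<Rightarrow> bool" where
  "finite_posterior f pr y X \<longleftrightarrow>
     integrable lborel (post_kernel f pr y X) \<and>
     integrable lborel (\<lambda>(a, b, s). post_kernel f pr y X (a, b, s) / s) \<and>
     0 < (\<integral>x. post_kernel f pr y X x \<partial>lborel)"

text \<open>Generalized Bayes estimator of sigma^2 under Stein's loss: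
  { E[1/sigma^2 | y] }^(-1).\<close>
definition gb_stein ::
  "(real \<Rightarrow> real) \<Rightarrow> (real \<Rightarrow> real^'p \<Rightarrow> real) \<Rightarrow> real^'n \<Rightarrow> real^'p^'n::finite \<Rightarrow> real" where
  "gb_stein f pr y X =
     1 / ((\<integral>(a, b, s). post_kernel f pr y X (a, b, s) / s \<partial>lborel)
          / (\<integral>x. post_kernel f pr y X x \<partial>lborel))"

end

theory Submission
  imports Defs
begin

lemma scale_1d:
  fixes h :: "real \<Rightarrow> ennreal"
  assumes [measurable]: "h \<in> borel_measurable borel" and c: "c > 0"
  shows "(\<integral>\<^sup>+s. h s \<partial>lborel) = ennreal c * (\<integral>\<^sup>+u. h (c * u) \<partial>lborel)"
  using nn_integral_real_affine[of h c 0] c by simp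

lemma scale_nd:
  fixes h :: "real^'n::finite \<Rightarrow> ennreal"
  assumes [measurable]: "h \<in> borel_measurable borel" and u: "u > 0"
  shows "(\<integral>\<^sup>+e. h e \<partial>lborel) = ennreal (u powr (real CARD('n) / 2)) * (\<integral>\<^sup>+e. h (sqrt u *\<^sub>R e) \<partial>lborel)"
proof -
  have "(\<integral>\<^sup>+e. h e \<partial>lborel) = (\<integral>\<^sup>+e. h e \<partial>(density (distr lborel borel (\<lambda>x. 0 + sqrt u *\<^sub>R x)) (\<lambda>_. \<bar>sqrt u\<bar>^DIM(real^'n))))"
    using lborel_affine[of "sqrt u" "0::real^'n"] u by simp
  also have "\<dots> = ennreal (\<bar>sqrt u\<bar>^DIM(real^'n)) * (\<integral>\<^sup>+e. h (sqrt u *\<^sub>R e) \<partial>lborel)"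
    by (simp add: nn_integral_density nn_integral_distr nn_integral_cmult)
  also have "\<bar>sqrt u\<bar>^DIM(real^'n) = u powr (real CARD('n) / 2)"
    using u by (simp add: powr_half_sqrt[symmetric] powr_realpow[symmetric] powr_powr)
  finally show ?thesis .
qed


lemma powr_cong_exp: "a = b \<Longrightarrow> x powr a = x powr b" by simp

lemma tonelli_gen:
  fixes f g :: "real \<Rightarrow> real" and k m :: nat
  assumes [measurable]: "f \<in> borel_measurable borel" "g \<in> borel_measurable borel"
    and fnn: "\<And>t. t \<ge> 0 \<Longrightarrow> 0 \<le> f t" and gnn: "\<And>t. t \<ge> 0 \<Longrightarrow> 0 \<le> g t"
  shows "(\<integral>\<^sup>+s. indicator {0<..} s * ennreal (s powr (- real CARD('n) / 2 - 1 - real k) * f (1/s)) \<partial>lborel) *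
         (\<integral>\<^sup>+e. ennreal ((e\<bullet>e)^m * g (e\<bullet>e)) \<partial>(lborel :: (real^'n::finite) measure))
       = (\<integral>\<^sup>+e. ennreal ((e\<bullet>e)^k * f (e\<bullet>e)) \<partial>(lborel :: (real^'n) measure)) *
         (\<integral>\<^sup>+u. indicator {0<..} u * ennreal (u powr (real m + real CARD('n) / 2 - 1) * g u) \<partial>lborel)"
proof -
  define N where "N = real CARD('n)"
  define F where "F = (\<lambda>(s::real) (e::real^'n). indicator {0<..} s * ennreal (s powr (-1 - real k) * f (1/s) * ((s*(e\<bullet>e))^m * g (s*(e\<bullet>e)))))"
  define G where "G = (\<lambda>(e::real^'n) (u::real). indicator {0<..} u * ennreal ((e\<bullet>e)^k * (u powr (real m - 1 - real k) * g u) * f (e\<bullet>e / u)))"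
  have mF[measurable]: "case_prod F \<in> borel_measurable (lborel \<Otimes>\<^sub>M lborel)"
    unfolding F_def by measurable
  have mG[measurable]: "case_prod G \<in> borel_measurable (lborel \<Otimes>\<^sub>M lborel)"
    unfolding G_def by measurable
  define Mm where "Mm = (\<integral>\<^sup>+e. ennreal ((e\<bullet>e)^m * g (e\<bullet>e)) \<partial>(lborel :: (real^'n) measure))"
  define Mk where "Mk = (\<integral>\<^sup>+e. ennreal ((e\<bullet>e)^k * f (e\<bullet>e)) \<partial>(lborel :: (real^'n) measure))"
  have A: "(\<integral>\<^sup>+e. F s e \<partial>lborel) = indicator {0<..} s * ennreal (s powr (- N / 2 - 1 - real k) * f (1/s)) * Mm" for s
  proof (cases "s > 0")
    case False thus ?thesis by (simp add: F_def)
  next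
    case True
    have fs: "0 \<le> s powr (-1 - real k) * f (1/s)" using True fnn by simp
    have "(\<integral>\<^sup>+e. F s e \<partial>lborel) = (\<integral>\<^sup>+e. ennreal (s powr (-1 - real k) * f (1/s)) * ennreal ((s*((e::real^'n)\<bullet>e))^m * g (s*(e\<bullet>e))) \<partial>lborel)"
      unfolding F_def
    proof (rule nn_integral_cong)
      fix e :: "real^'n"
      have "0 \<le> (s*(e\<bullet>e))^m * g (s*(e\<bullet>e))" using True gnn by simp
      then show "indicator {0<..} s * ennreal (s powr (-1 - real k) * f (1/s) * ((s*(e\<bullet>e))^m * g (s*(e\<bullet>e)))) = ennreal (s powr (-1 - real k) * f (1/s)) * ennreal ((s*(e\<bullet>e))^m * g (s*(e\<bullet>e)))"
        using True fs by (simp add: ennreal_mult)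
    qed
    also have "\<dots> = ennreal (s powr (-1 - real k) * f (1/s)) * (\<integral>\<^sup>+e. ennreal ((s*((e::real^'n)\<bullet>e))^m * g (s*(e\<bullet>e))) \<partial>lborel)"
      by (rule nn_integral_cmult) measurable
    also have "(\<integral>\<^sup>+e. ennreal ((s*((e::real^'n)\<bullet>e))^m * g (s*(e\<bullet>e))) \<partial>lborel)
        = ennreal ((1/s) powr (N / 2)) * (\<integral>\<^sup>+e. ennreal ((s*((sqrt (1/s) *\<^sub>R e)\<bullet>(sqrt (1/s) *\<^sub>R e)))^m * g (s*((sqrt (1/s) *\<^sub>R e)\<bullet>(sqrt (1/s) *\<^sub>R e)))) \<partial>(lborel :: (real^'n) measure))"
      unfolding N_def by (rule scale_nd) (use True in auto)
    also have "(\<lambda>e::real^'n. s*((sqrt (1/s) *\<^sub>R e)\<bullet>(sqrt (1/s) *\<^sub>R e))) = (\<lambda>e. e \<bullet> e)"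
      using True by (auto simp: inner_scaleR_left inner_scaleR_right)
    also have "(\<integral>\<^sup>+e. ennreal ((e\<bullet>e)^m * g (e\<bullet>e)) \<partial>(lborel :: (real^'n) measure)) = Mm" by (simp add: Mm_def)
    also have "ennreal (s powr (-1 - real k) * f (1/s)) * (ennreal ((1/s) powr (N / 2)) * Mm)
        = ennreal (s powr (- N / 2 - 1 - real k) * f (1/s)) * Mm"
    proof -
      have "s powr (-1 - real k) * f (1/s) * (1/s) powr (N / 2) = s powr (- N / 2 - 1 - real k) * f (1/s)"
      proof -
        have "(1/s) powr (N/2) = s powr (-(N/2))" using True by (simp add: powr_minus_divide powr_divide)
        moreover have "s powr (-1 - real k) * s powr (-(N/2)) = s powr (- N / 2 - 1 - real k)"
        proof -
          have "- 1 - real k + (-(N/2)) = - N/2 - 1 - real k" by simp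
          then show ?thesis by (metis powr_add)
        qed
        ultimately show ?thesis by (simp add: algebra_simps)
      qed
      note eq1 = this
      have eq2: "ennreal (s powr (-1 - real k) * f (1/s)) * (ennreal ((1/s) powr (N / 2)) * Mm)
         = ennreal (s powr (-1 - real k) * f (1/s) * (1/s) powr (N / 2)) * Mm"
        by (subst ennreal_mult[OF fs]) (auto simp: mult.assoc)
      show ?thesis unfolding eq2 eq1 ..
    qed
    finally show ?thesis using True by (simp add: Mm_def)
  qed
  have "(\<integral>\<^sup>+s. indicator {0<..} s * ennreal (s powr (- N / 2 - 1 - real k) * f (1/s)) \<partial>lborel) * Mm
      = (\<integral>\<^sup>+s. (\<integral>\<^sup>+e. F s e \<partial>lborel) \<partial>lborel)"
    by (subst nn_integral_multc[symmetric]) (auto simp: A)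
  also have "\<dots> = (\<integral>\<^sup>+e. (\<integral>\<^sup>+s. F s e \<partial>lborel) \<partial>(lborel :: (real^'n) measure))"
    by (rule lborel_pair.Fubini'[symmetric]) (rule mF)
  also have "\<dots> = (\<integral>\<^sup>+e. (\<integral>\<^sup>+u. G e u \<partial>lborel) \<partial>(lborel :: (real^'n) measure))"
  proof (rule nn_integral_cong_AE, rule eventually_mono[OF AE_lborel_singleton[of 0]])
    fix e :: "real^'n" assume "e \<noteq> 0"
    define r where "r = e \<bullet> e"
    have r: "r > 0" using \<open>e \<noteq> 0\<close> by (simp add: r_def)
    have "(\<integral>\<^sup>+s. F s e \<partial>lborel) = ennreal (1/r) * (\<integral>\<^sup>+u. F ((1/r) * u) e \<partial>lborel)"
      by (rule scale_1d) (use r in auto)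
    also have "\<dots> = (\<integral>\<^sup>+u. ennreal (1/r) * F ((1/r) * u) e \<partial>lborel)"
      by (rule nn_integral_cmult[symmetric]) measurable
    also have "\<dots> = (\<integral>\<^sup>+u. G e u \<partial>lborel)"
    proof (rule nn_integral_cong)
      fix u :: real
      show "ennreal (1/r) * F ((1/r) * u) e = G e u"
      proof (cases "u > 0")
        case False
        then have "\<not> (1/r) * u > 0" using r by (simp add: zero_less_mult_iff zero_less_divide_iff)
        then show ?thesis using False by (simp add: F_def G_def)
      next
        case True
        have h1: "u ^ m * u powr (-1 - real k) = u powr (real m - 1 - real k)"
          using True by (simp add: powr_realpow[symmetric] powr_add[symmetric]) (rule powr_cong_exp, simp)
        have h2: "(u/r) powr (-1 - real k) / r = r ^ k * u powr (-1 - real k)"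
        proof -
          have e: "-1 - real k = -(1 + real k)" by simp
          have "(u/r) powr (-(1 + real k)) = u powr (-(1 + real k)) / r powr (-(1 + real k))"
            using True r by (simp add: powr_divide)
          also have "\<dots> = u powr (-(1 + real k)) * r powr (1 + real k)"
            by (simp only: powr_minus[of r "1 + real k"] divide_inverse inverse_inverse_eq)
          finally have "(u/r) powr (-1 - real k) = u powr (-1 - real k) * r powr (1 + real k)"
            unfolding e .
          moreover have "r powr (1 + real k) / r = r ^ k"
            using r by (simp add: powr_add powr_realpow)
          ultimately show ?thesis by (metis times_divide_eq_left mult.commute)
        qed
        have nn: "0 \<le> (u/r) powr (-1 - real k) * f (r/u) * (u ^ m * g u)"
          using True r fnn gnn by simp
        have "ennreal (1/r) * F ((1/r) * u) e = ennreal ((1/r) * ((u/r) powr (-1 - real k) * f (r/u) * (u ^ m * g u)))"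
        proof -
          have F_eq: "F ((1/r) * u) e = ennreal ((u/r) powr (-1 - real k) * f (r/u) * (u ^ m * g u))"
            using True r by (simp add: F_def r_def[symmetric])
          show ?thesis unfolding F_eq by (rule ennreal_mult[symmetric]) (use r nn in auto)
        qed
        also have "(1/r) * ((u/r) powr (-1 - real k) * f (r/u) * (u ^ m * g u))
            = r ^ k * (u powr (real m - 1 - real k) * g u) * f (r/u)"
        proof -
          have A: "(u/r) powr (-1 - real k) = r * (r ^ k * u powr (-1 - real k))"
            using h2 r by (simp add: field_simps)
          show ?thesis unfolding A h1[symmetric] using r by (simp add: field_simps)
        qed
        finally show ?thesis using True by (simp add: G_def r_def)
      qed
    qed
    finally show "(\<integral>\<^sup>+s. F s e \<partial>lborel) = (\<integral>\<^sup>+u. G e u \<partial>lborel)" .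
  qed
  also have "\<dots> = (\<integral>\<^sup>+u. (\<integral>\<^sup>+e. G e u \<partial>(lborel :: (real^'n) measure)) \<partial>lborel)"
    by (rule lborel_pair.Fubini'[symmetric]) (rule mG)
  also have "\<dots> = (\<integral>\<^sup>+u. indicator {0<..} u * ennreal (u powr (real m + N / 2 - 1) * g u) * Mk \<partial>lborel)"
  proof (rule nn_integral_cong)
    fix u :: real
    show "(\<integral>\<^sup>+e. G e u \<partial>(lborel :: (real^'n) measure)) = indicator {0<..} u * ennreal (u powr (real m + N / 2 - 1) * g u) * Mk"
    proof (cases "u > 0")
      case False thus ?thesis by (simp add: G_def)
    next
      case True
      have c0: "0 \<le> u powr (real m - 1 - real k) * g u" using True gnn by simp
      have "(\<integral>\<^sup>+e. G e u \<partial>(lborel :: (real^'n) measure))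
          = (\<integral>\<^sup>+e. ennreal (u powr (real m - 1 - real k) * g u) * ennreal (((e::real^'n)\<bullet>e)^k * f (e\<bullet>e / u)) \<partial>lborel)"
      proof (rule nn_integral_cong)
        fix e :: "real^'n"
        have "0 \<le> (e\<bullet>e)^k * f (e\<bullet>e / u)" using True fnn by simp
        then show "G e u = ennreal (u powr (real m - 1 - real k) * g u) * ennreal ((e\<bullet>e)^k * f (e\<bullet>e / u))"
          using True c0 by (simp add: G_def ennreal_mult[symmetric] mult_ac)
      qed
      also have "\<dots> = ennreal (u powr (real m - 1 - real k) * g u) * (\<integral>\<^sup>+e. ennreal (((e::real^'n)\<bullet>e)^k * f (e\<bullet>e / u)) \<partial>lborel)"
        by (rule nn_integral_cmult) measurable
      also have "(\<integral>\<^sup>+e. ennreal (((e::real^'n)\<bullet>e)^k * f (e\<bullet>e / u)) \<partial>lborel)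
          = ennreal (u powr (N / 2)) * (\<integral>\<^sup>+e. ennreal (((sqrt u *\<^sub>R e)\<bullet>(sqrt u *\<^sub>R e))^k * f (((sqrt u *\<^sub>R e)\<bullet>(sqrt u *\<^sub>R e)) / u)) \<partial>(lborel :: (real^'n) measure))"
        unfolding N_def by (rule scale_nd) (use True in auto)
      also have "(\<integral>\<^sup>+e. ennreal (((sqrt u *\<^sub>R e)\<bullet>(sqrt u *\<^sub>R e))^k * f (((sqrt u *\<^sub>R e)\<bullet>(sqrt u *\<^sub>R e)) / u)) \<partial>(lborel :: (real^'n) measure))
          = (\<integral>\<^sup>+e. ennreal (u ^ k) * ennreal ((e\<bullet>e)^k * f (e\<bullet>e)) \<partial>(lborel :: (real^'n) measure))"
      proof (rule nn_integral_cong)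
        fix e :: "real^'n"
        have "0 \<le> (e\<bullet>e)^k * f (e\<bullet>e)" using fnn by simp
        moreover have sq: "(sqrt u *\<^sub>R e)\<bullet>(sqrt u *\<^sub>R e) = u * (e\<bullet>e)"
          using True by (simp add: inner_scaleR_left inner_scaleR_right)
        ultimately show "ennreal (((sqrt u *\<^sub>R e)\<bullet>(sqrt u *\<^sub>R e))^k * f (((sqrt u *\<^sub>R e)\<bullet>(sqrt u *\<^sub>R e)) / u)) = ennreal (u ^ k) * ennreal ((e\<bullet>e)^k * f (e\<bullet>e))"
          unfolding sq using True by (simp add: ennreal_mult[symmetric] power_mult_distrib mult_ac)
      qed
      also have "\<dots> = ennreal (u ^ k) * Mk"
        unfolding Mk_def by (rule nn_integral_cmult) measurable
      also have "ennreal (u powr (real m - 1 - real k) * g u) * (ennreal (u powr (N / 2)) * (ennreal (u ^ k) * Mk))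
          = ennreal (u powr (real m + N / 2 - 1) * g u) * Mk"
      proof -
        have "u powr (real m - 1 - real k) * u powr (N / 2) * u ^ k = u powr (real m + N / 2 - 1)"
          using True by (simp add: powr_realpow[symmetric] powr_add[symmetric]) (rule powr_cong_exp, simp)
        then have eq1: "u powr (real m - 1 - real k) * g u * (u powr (N / 2) * u ^ k) = u powr (real m + N / 2 - 1) * g u"
          by (simp add: mult_ac)
        have eq2: "ennreal (u powr (real m - 1 - real k) * g u) * (ennreal (u powr (N / 2)) * (ennreal (u ^ k) * Mk))
            = ennreal (u powr (real m - 1 - real k) * g u * (u powr (N / 2) * u ^ k)) * Mk"
          using True by (subst ennreal_mult[OF c0]) (auto simp: ennreal_mult mult.assoc)
        show ?thesis unfolding eq2 eq1 ..
      qed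
      finally show ?thesis using True by simp
    qed
  qed
  also have "\<dots> = (\<integral>\<^sup>+u. indicator {0<..} u * ennreal (u powr (real m + N / 2 - 1) * g u) \<partial>lborel) * Mk"
    by (rule nn_integral_multc) measurable
  finally show ?thesis by (simp add: N_def Mm_def Mk_def mult.commute)
qed


lemma post_kernel_meas:
  fixes f :: "real \<Rightarrow> real" and pr :: "real \<Rightarrow> real^'p::finite \<Rightarrow> real" and y :: "real^'n::finite" and X :: "real^'p^'n"
  assumes [measurable]: "f \<in> borel_measurable borel" and pm: "(\<lambda>(a, b). pr a b) \<in> borel_measurable borel"
  shows "(\<lambda>x. ennreal (post_kernel f pr y X x / (snd (snd x))^k)) \<in> borel_measurable (lborel \<Otimes>\<^sub>M (lborel \<Otimes>\<^sub>M lborel))"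
proof -
  have bp: "(borel :: (real \<times> (real^'p) \<times> real) measure) = borel \<Otimes>\<^sub>M (borel \<Otimes>\<^sub>M borel)"
    by (simp add: borel_prod)
  have [measurable]: "(\<lambda>x. pr (fst x) (fst (snd x))) \<in> borel_measurable (borel \<Otimes>\<^sub>M (borel \<Otimes>\<^sub>M (borel :: real measure)))"
  proof -
    have "(\<lambda>x. (fst x, fst (snd x))) \<in> measurable (borel :: (real \<times> (real^'p) \<times> real) measure) (borel :: (real \<times> (real^'p)) measure)"
      by (intro borel_measurable_continuous_onI continuous_intros)
    from measurable_compose[OF this pm] show ?thesis by (simp add: bp)
  qed
  have [measurable]: "(\<lambda>x. X *v fst (snd x)) \<in> borel_measurable ((borel :: real measure) \<Otimes>\<^sub>M ((borel :: (real^'p) measure) \<Otimes>\<^sub>M (borel :: real measure)))"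
  proof -
    have "(\<lambda>x::(real \<times> (real^'p) \<times> real). X *v fst (snd x)) \<in> borel_measurable borel"
      by (intro borel_measurable_continuous_onI bounded_linear.continuous_on[OF matrix_vector_mul_bounded_linear] continuous_intros)
    then show ?thesis by (simp add: bp)
  qed
  show ?thesis
    unfolding post_kernel_def by (simp add: case_prod_beta') measurable
qed


lemma powr_cong_exp2: "a = b \<Longrightarrow> x powr a = x powr b" by simp

lemma powr_div_pow: "x > 0 \<Longrightarrow> x powr a / x ^ j = x powr (a - real j)"
  by (simp add: powr_diff powr_realpow)

lemma I_zero_or_top:
  assumes a: "a > 1"
  shows "(\<integral>\<^sup>+s. indicator {0<..} s * ennreal (s powr (- a)) \<partial>lborel) = 0 \<or>
         (\<integral>\<^sup>+s. indicator {0<..} s * ennreal (s powr (- a)) \<partial>lborel) = \<infinity>"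
proof -
  define I where "I = (\<integral>\<^sup>+s. indicator {0<..} s * ennreal (s powr (- a)) \<partial>lborel)"
  have "I = ennreal 2 * (\<integral>\<^sup>+u. indicator {0<..} (2*u) * ennreal ((2*u) powr (- a)) \<partial>lborel)"
    unfolding I_def by (rule scale_1d) auto
  also have "(\<integral>\<^sup>+u. indicator {0<..} (2*u) * ennreal ((2*u) powr (- a)) \<partial>lborel)
      = (\<integral>\<^sup>+u. ennreal (2 powr (-a)) * (indicator {0<..} u * ennreal (u powr (- a))) \<partial>lborel)"
    by (rule nn_integral_cong) (auto simp: indicator_def powr_mult ennreal_mult)
  also have "\<dots> = ennreal (2 powr (-a)) * I"
    unfolding I_def by (rule nn_integral_cmult) measurable
  finally have eq: "I = ennreal (2 * 2 powr (-a)) * I" by (simp add: ennreal_mult mult.assoc)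
  have c: "2 * 2 powr (-a) < (1::real)"
  proof -
    have "2 * 2 powr (-a) = 2 powr (1 - a)" by (simp add: powr_diff powr_minus divide_inverse)
    also have "\<dots> < 2 powr 0" using a by (intro powr_less_mono) auto
    finally show ?thesis by simp
  qed
  show ?thesis
  proof (cases "I = \<infinity>")
    case True thus ?thesis by (simp add: I_def)
  next
    case False
    then obtain i where i: "I = ennreal i" "i \<ge> 0" by (cases I) auto
    then have "ennreal i = ennreal (2 * 2 powr (-a) * i)" using eq by (simp add: ennreal_mult)
    then have "i = 2 * 2 powr (-a) * i" using i by (subst (asm) ennreal_inj) auto
    then have "i = 0" using c i by (metis mult_cancel_right1 less_irrefl mult.commute mult_eq_0_iff) 
    then show ?thesis using i by (simp add: I_def)
  qed
qed


lemma post_decomp: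
  fixes f :: "real \<Rightarrow> real" and pr :: "real \<Rightarrow> real^'p::finite \<Rightarrow> real" and y :: "real^'n::finite" and X :: "real^'p^'n" and k :: nat
  assumes fm[measurable]: "f \<in> borel_measurable borel" and fnn: "\<And>t. t \<ge> 0 \<Longrightarrow> 0 \<le> f t"
    and pnn: "\<And>a b. 0 \<le> pr a b" and pm: "(\<lambda>(a, b). pr a b) \<in> borel_measurable borel"
  shows "\<exists>C. (C = 0 \<or> C = \<infinity>) \<and>
    (\<integral>\<^sup>+x. ennreal (post_kernel f pr y X x / (snd (snd x))^k) \<partial>lborel)
      = (\<integral>\<^sup>+s. indicator {0<..} s * ennreal (s powr (- real CARD('n) / 2 - 1 - real k) * f (1/s)) \<partial>lborel) *
        (\<integral>\<^sup>+w. ennreal (pr (fst w) (snd w) * (if (norm (y - fst w *\<^sub>R vec 1 - X *v snd w))\<^sup>2 > 0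
              then ((norm (y - fst w *\<^sub>R vec 1 - X *v snd w))\<^sup>2) powr (- real CARD('n) / 2 - real k) else 0)) \<partial>(lborel \<Otimes>\<^sub>M lborel)) + C"
proof -
  define N where "N = real CARD('n)"
  define R where "R = (\<lambda>a b. (norm (y - a *\<^sub>R vec 1 - X *v b))\<^sup>2)"
  define K where "K = (\<lambda>x. ennreal (post_kernel f pr y X x / (snd (snd x))^k))"
  define Q where "Q = (\<integral>\<^sup>+s. indicator {0<..} s * ennreal (s powr (- N / 2 - 1 - real k) * f (1/s)) \<partial>lborel)"
  define I where "I = (\<integral>\<^sup>+s. indicator {0<..} s * ennreal (s powr (- (N / 2 + 1 + real k))) \<partial>lborel)"
  define Xf where "Xf = (\<lambda>w. ennreal (pr (fst w) (snd w) * (if R (fst w) (snd w) > 0 then R (fst w) (snd w) powr (- N / 2 - real k) else 0)))"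
  define Yf where "Yf = (\<lambda>w. ennreal (if R (fst w) (snd w) = 0 then f 0 * pr (fst w) (snd w) else 0))"
  have Rnn: "R a b \<ge> 0" for a b by (simp add: R_def)
  have bp: "(borel :: (real \<times> (real^'p)) measure) = borel \<Otimes>\<^sub>M borel"
    by (simp add: borel_prod)
  have [measurable]: "(\<lambda>w. pr (fst w) (snd w)) \<in> borel_measurable ((borel :: real measure) \<Otimes>\<^sub>M (borel :: (real^'p) measure))"
    using pm by (simp add: bp[symmetric] case_prod_beta')
  have [measurable]: "(\<lambda>w. R (fst w) (snd w)) \<in> borel_measurable ((borel :: real measure) \<Otimes>\<^sub>M (borel :: (real^'p) measure))"
  proof -
    have "(\<lambda>w::real \<times> (real^'p). R (fst w) (snd w)) \<in> borel_measurable borel"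
      unfolding R_def
      by (intro borel_measurable_continuous_onI bounded_linear.continuous_on[OF matrix_vector_mul_bounded_linear] continuous_intros)
    then show ?thesis by (simp add: bp)
  qed
  have Xm[measurable]: "Xf \<in> borel_measurable (lborel \<Otimes>\<^sub>M lborel)" unfolding Xf_def by measurable
  have Ym[measurable]: "Yf \<in> borel_measurable (lborel \<Otimes>\<^sub>M lborel)" unfolding Yf_def by measurable
  have Km[measurable]: "K \<in> borel_measurable (lborel \<Otimes>\<^sub>M (lborel \<Otimes>\<^sub>M lborel))"
    unfolding K_def by (rule post_kernel_meas[OF fm pm])
  have lb: "(lborel :: (real \<times> (real^'p) \<times> real) measure) = lborel \<Otimes>\<^sub>M (lborel \<Otimes>\<^sub>M lborel)"
    by (simp add: lborel_prod)
  have inner: "(\<integral>\<^sup>+s. K (a, b, s) \<partial>lborel) = Xf (a, b) * Q + Yf (a, b) * I" for a b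
  proof -
    define p where "p = pr a b"
    have p: "p \<ge> 0" using pnn by (simp add: p_def)
    have Kab[measurable]: "(\<lambda>s. K (a, b, s)) \<in> borel_measurable lborel"
      by (rule measurable_Pair2[OF measurable_Pair2[OF Km]]) auto
    have Keq: "K (a, b, s) = ennreal ((if 0 < s then s powr (- N / 2) * f (R a b / s) * p * (1 / s) else 0) / s ^ k)" for s
      by (simp add: K_def post_kernel_def R_def N_def p_def)
    show ?thesis
    proof (cases "R a b > 0")
      case True
      define r where "r = R a b"
      have r: "r > 0" using True by (simp add: r_def)
      have Y0: "Yf (a, b) = 0" using True by (simp add: Yf_def)
      have X: "Xf (a, b) = ennreal (p * r powr (- N / 2 - real k))" using True by (simp add: Xf_def r_def p_def)
      have "(\<integral>\<^sup>+s. K (a, b, s) \<partial>lborel) = ennreal r * (\<integral>\<^sup>+u. K (a, b, r * u) \<partial>lborel)"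
        by (rule scale_1d) (use r in auto)
      also have "\<dots> = (\<integral>\<^sup>+u. ennreal r * K (a, b, r * u) \<partial>lborel)"
        by (rule nn_integral_cmult[symmetric]) (use Kab in measurable)
      also have "\<dots> = (\<integral>\<^sup>+u. Xf (a, b) * (indicator {0<..} u * ennreal (u powr (- N / 2 - 1 - real k) * f (1/u))) \<partial>lborel)"
      proof (rule nn_integral_cong)
        fix u :: real
        show "ennreal r * K (a, b, r * u) = Xf (a, b) * (indicator {0<..} u * ennreal (u powr (- N / 2 - 1 - real k) * f (1/u)))"
        proof (cases "u > 0")
          case False
          then have "\<not> 0 < r * u" using r by (simp add: zero_less_mult_iff)
          then show ?thesis using False by (simp add: Keq)
        next
          case True
          have F: "f (1/u) \<ge> 0" using True fnn by simp
          have e1: "r powr (- N / 2) / r ^ k = r powr (- N / 2 - real k)" using r by (rule powr_div_pow)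
          have e2: "u powr (- N / 2) / u ^ Suc k = u powr (- N / 2 - 1 - real k)"
          proof -
            have "u powr (- N / 2) / u ^ Suc k = u powr (- N / 2 - real (Suc k))" using True by (rule powr_div_pow)
            also have "\<dots> = u powr (- N / 2 - 1 - real k)" by (rule powr_cong_exp2) simp
            finally show ?thesis .
          qed
          have "r * ((r * u) powr (- N / 2) * f (1/u) * p * (1 / (r * u)) / (r * u) ^ k)
              = p * f (1/u) * (r powr (- N / 2) / r ^ k) * (u powr (- N / 2) / u ^ Suc k)"
            using r True by (simp add: powr_mult field_simps power_mult_distrib)
          also have "\<dots> = (p * r powr (- N / 2 - real k)) * (u powr (- N / 2 - 1 - real k) * f (1/u))"
            unfolding e1 e2 by (simp add: mult_ac)
          finally have eq: "r * ((r * u) powr (- N / 2) * f (1/u) * p * (1 / (r * u)) / (r * u) ^ k)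
              = (p * r powr (- N / 2 - real k)) * (u powr (- N / 2 - 1 - real k) * f (1/u))" .
          have "ennreal r * K (a, b, r * u) = ennreal (r * ((r * u) powr (- N / 2) * f (1/u) * p * (1 / (r * u)) / (r * u) ^ k))"
          proof -
            have KZ: "K (a, b, r * u) = ennreal ((r * u) powr (- N / 2) * f (1/u) * p * (1 / (r * u)) / (r * u) ^ k)"
              using r True by (simp add: Keq r_def[symmetric])
            show ?thesis unfolding KZ by (rule ennreal_mult[symmetric]) (use r True p F in auto)
          qed
          also have "\<dots> = ennreal (p * r powr (- N / 2 - real k)) * ennreal (u powr (- N / 2 - 1 - real k) * f (1/u))"
            unfolding eq using p F True r by (simp add: ennreal_mult)
          finally show ?thesis using True X by simp
        qed
      qed
      also have "\<dots> = Xf (a, b) * Q"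
        unfolding Q_def by (rule nn_integral_cmult) measurable
      finally show ?thesis by (simp add: Y0)
    next
      case False
      then have R0: "R a b = 0" using Rnn[of a b] by simp
      have X0: "Xf (a, b) = 0" using R0 by (simp add: Xf_def)
      have Y: "Yf (a, b) = ennreal (f 0 * p)" using R0 by (simp add: Yf_def p_def)
      have "(\<integral>\<^sup>+s. K (a, b, s) \<partial>lborel) = (\<integral>\<^sup>+s. Yf (a, b) * (indicator {0<..} s * ennreal (s powr (- (N / 2 + 1 + real k)))) \<partial>lborel)"
      proof (rule nn_integral_cong)
        fix s :: real
        show "K (a, b, s) = Yf (a, b) * (indicator {0<..} s * ennreal (s powr (- (N / 2 + 1 + real k))))"
        proof (cases "s > 0")
          case False thus ?thesis by (simp add: Keq)
        next
          case True
          have F: "f 0 \<ge> 0" using fnn by simp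
          have e: "s powr (- N / 2) * (1 / s) / s ^ k = s powr (- (N / 2 + 1 + real k))"
          proof -
            have "s powr (- N / 2) * (1 / s) / s ^ k = s powr (- N / 2) / s ^ Suc k" by simp
            also have "\<dots> = s powr (- N / 2 - real (Suc k))" using True by (rule powr_div_pow)
            also have "\<dots> = s powr (- (N / 2 + 1 + real k))" by (rule powr_cong_exp2) simp
            finally show ?thesis .
          qed
          have "s powr (- N / 2) * f 0 * p * (1 / s) / s ^ k = (f 0 * p) * (s powr (- N / 2) * (1 / s) / s ^ k)"
            by (simp add: field_simps)
          also have "\<dots> = (f 0 * p) * s powr (- (N / 2 + 1 + real k))" unfolding e ..
          finally have eq: "s powr (- N / 2) * f 0 * p * (1 / s) / s ^ k = (f 0 * p) * s powr (- (N / 2 + 1 + real k))" .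
          have KZ: "K (a, b, s) = ennreal ((f 0 * p) * s powr (- (N / 2 + 1 + real k)))"
            unfolding Keq eq[symmetric] using True R0 by simp
          show ?thesis unfolding KZ Y using True F p by (simp add: ennreal_mult)
        qed
      qed
      also have "\<dots> = Yf (a, b) * I"
        unfolding I_def by (rule nn_integral_cmult) measurable
      finally show ?thesis by (simp add: X0)
    qed
  qed
  have "(\<integral>\<^sup>+x. K x \<partial>lborel) = (\<integral>\<^sup>+a. (\<integral>\<^sup>+bs. K (a, bs) \<partial>(lborel \<Otimes>\<^sub>M lborel)) \<partial>lborel)"
    unfolding lb by (rule lborel_pair.nn_integral_fst[symmetric]) (rule Km)
  also have "\<dots> = (\<integral>\<^sup>+a. (\<integral>\<^sup>+b. (\<integral>\<^sup>+s. K (a, b, s) \<partial>lborel) \<partial>lborel) \<partial>lborel)"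
  proof (rule nn_integral_cong)
    fix a :: real
    have Ka: "(\<lambda>bs. K (a, bs)) \<in> borel_measurable (lborel \<Otimes>\<^sub>M lborel)"
      by (rule measurable_Pair2[OF Km]) simp
    show "(\<integral>\<^sup>+bs. K (a, bs) \<partial>(lborel \<Otimes>\<^sub>M lborel)) = (\<integral>\<^sup>+b. (\<integral>\<^sup>+s. K (a, b, s) \<partial>lborel) \<partial>lborel)"
      using lborel.nn_integral_fst[OF Ka] by simp
  qed
  also have "\<dots> = (\<integral>\<^sup>+a. (\<integral>\<^sup>+b. Xf (a, b) * Q + Yf (a, b) * I \<partial>lborel) \<partial>lborel)"
    by (simp add: inner)
  also have "\<dots> = (\<integral>\<^sup>+w. Xf w * Q + Yf w * I \<partial>(lborel \<Otimes>\<^sub>M lborel))"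
    by (rule lborel.nn_integral_fst) measurable
  also have "\<dots> = (\<integral>\<^sup>+w. Xf w * Q \<partial>(lborel \<Otimes>\<^sub>M lborel)) + (\<integral>\<^sup>+w. Yf w * I \<partial>(lborel \<Otimes>\<^sub>M lborel))"
    by (rule nn_integral_add) measurable
  also have "\<dots> = (\<integral>\<^sup>+w. Xf w \<partial>(lborel \<Otimes>\<^sub>M lborel)) * Q + (\<integral>\<^sup>+w. Yf w \<partial>(lborel \<Otimes>\<^sub>M lborel)) * I"
    by (simp add: nn_integral_multc)
  finally have main: "(\<integral>\<^sup>+x. K x \<partial>lborel) = (\<integral>\<^sup>+w. Xf w \<partial>(lborel \<Otimes>\<^sub>M lborel)) * Q + (\<integral>\<^sup>+w. Yf w \<partial>(lborel \<Otimes>\<^sub>M lborel)) * I" .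
  have I01: "I = 0 \<or> I = \<infinity>"
    unfolding I_def by (rule I_zero_or_top) (simp add: N_def add_pos_nonneg)
  have C01: "(\<integral>\<^sup>+w. Yf w \<partial>(lborel \<Otimes>\<^sub>M lborel)) * I = 0 \<or> (\<integral>\<^sup>+w. Yf w \<partial>(lborel \<Otimes>\<^sub>M lborel)) * I = \<infinity>"
    using I01 by (auto simp: ennreal_mult_top)
  show ?thesis
    using main C01 unfolding K_def Q_def Xf_def R_def N_def by (auto simp: mult.commute)
qed


lemma J0_bounds:
  assumes a: "a \<ge> 0"
  shows "0 < (\<integral>\<^sup>+u. indicator {0<..} u * ennreal (u powr a * indicator {..1} u) \<partial>lborel)"
    and "(\<integral>\<^sup>+u. indicator {0<..} u * ennreal (u powr a * indicator {..1} u) \<partial>lborel) < \<infinity>"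
proof -
  have "(\<integral>\<^sup>+u. ennreal ((1/2) powr a) * indicator {1/2..1::real} u \<partial>lborel) \<le> (\<integral>\<^sup>+u. indicator {0<..} u * ennreal (u powr a * indicator {..1} u) \<partial>lborel)"
  proof (rule nn_integral_mono)
    fix u :: real
    show "ennreal ((1/2) powr a) * indicator {1/2..1::real} u \<le> indicator {0<..} u * ennreal (u powr a * indicator {..1} u)"
    proof (cases "u \<in> {1/2..1}")
      case True
      then have "(1/2) powr a \<le> u powr a" using a by (intro powr_mono2) auto
      then show ?thesis using True by (auto simp: indicator_def)
    qed (auto simp: indicator_def)
  qed
  moreover have "(\<integral>\<^sup>+u. ennreal ((1/2) powr a) * indicator {1/2..1::real} u \<partial>lborel) = ennreal ((1/2) powr a) * ennreal (1/2)"
    by (simp add: nn_integral_cmult_indicator)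
  moreover have "0 < ennreal ((1/2) powr a) * ennreal (1/2)"
  proof -
    have e: "ennreal ((1/2) powr a) * ennreal (1/2) = ennreal ((1/2) powr a * (1/2))"
      by (rule ennreal_mult[symmetric]) auto
    have "0 < ennreal ((1/2) powr a * (1/2))" by simp
    then show ?thesis by (simp only: e)
  qed
  ultimately show "0 < (\<integral>\<^sup>+u. indicator {0<..} u * ennreal (u powr a * indicator {..1} u) \<partial>lborel)"
    by (metis order_less_le_trans)
  have "(\<integral>\<^sup>+u. indicator {0<..} u * ennreal (u powr a * indicator {..1} u) \<partial>lborel) \<le> (\<integral>\<^sup>+u. indicator {0..1::real} u \<partial>lborel)"
  proof (rule nn_integral_mono)
    fix u :: real
    show "indicator {0<..} u * ennreal (u powr a * indicator {..1} u) \<le> indicator {0..1} u"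
    proof (cases "u \<in> {0<..1}")
      case True
      then have "u powr a \<le> 1 powr a" using a by (intro powr_mono2) auto
      then show ?thesis using True by (auto simp: indicator_def)
    qed (auto simp: indicator_def)
  qed
  also have "\<dots> = 1" by simp
  finally show "(\<integral>\<^sup>+u. indicator {0<..} u * ennreal (u powr a * indicator {..1} u) \<partial>lborel) < \<infinity>"
    by (simp add: le_less_trans)
qed

lemma J_normal:
  assumes b: "b > 0" and C: "C \<ge> 0"
  shows "(\<integral>\<^sup>+u. indicator {0<..} u * ennreal (u powr (b - 1) * (C * exp (- u / 2))) \<partial>lborel) = ennreal (2 powr b * C * Gamma b)"
proof -
  have "(\<integral>\<^sup>+u. indicator {0<..} u * ennreal (u powr (b - 1) * (C * exp (- u / 2))) \<partial>lborel)
      = ennreal 2 * (\<integral>\<^sup>+v. indicator {0<..} (2 * v) * ennreal ((2 * v) powr (b - 1) * (C * exp (- (2 * v) / 2))) \<partial>lborel)"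
    by (rule scale_1d) auto
  also have "\<dots> = (\<integral>\<^sup>+v. ennreal 2 * (indicator {0<..} (2 * v) * ennreal ((2 * v) powr (b - 1) * (C * exp (- (2 * v) / 2)))) \<partial>lborel)"
    by (rule nn_integral_cmult[symmetric]) measurable
  also have "\<dots> = (\<integral>\<^sup>+v. ennreal (2 powr b * C) * ennreal (indicator {0..} v * v powr (b - 1) / exp v) \<partial>lborel)"
  proof (rule nn_integral_cong)
    fix v :: real
    show "ennreal 2 * (indicator {0<..} (2 * v) * ennreal ((2 * v) powr (b - 1) * (C * exp (- (2 * v) / 2)))) = ennreal (2 powr b * C) * ennreal (indicator {0..} v * v powr (b - 1) / exp v)"
    proof (cases "v > 0")
      case True
      have eq: "2 * ((2 * v) powr (b - 1) * (C * exp (- (2 * v) / 2))) = 2 powr b * C * (v powr (b - 1) / exp v)"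
      proof -
        have h: "2 * 2 powr (b - 1) = (2::real) powr b" by (simp add: powr_diff)
        have "2 * ((2 * v) powr (b - 1) * (C * exp (- (2 * v) / 2))) = (2 * 2 powr (b - 1)) * C * (v powr (b - 1) * exp (- v))"
          using True by (simp add: powr_mult mult_ac)
        also have "\<dots> = 2 powr b * C * (v powr (b - 1) / exp v)"
          unfolding h by (simp add: exp_minus divide_inverse)
        finally show ?thesis .
      qed
      have "ennreal 2 * ennreal ((2 * v) powr (b - 1) * (C * exp (- (2 * v) / 2))) = ennreal (2 * ((2 * v) powr (b - 1) * (C * exp (- (2 * v) / 2))))"
        by (rule ennreal_mult[symmetric]) (use True C in auto)
      also have "\<dots> = ennreal (2 powr b * C * (v powr (b - 1) / exp v))" unfolding eq ..
      also have "\<dots> = ennreal (2 powr b * C) * ennreal (v powr (b - 1) / exp v)"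
        by (rule ennreal_mult) (use True C in auto)
      finally have "ennreal 2 * ennreal ((2 * v) powr (b - 1) * (C * exp (- (2 * v) / 2))) = ennreal (2 powr b * C) * ennreal (v powr (b - 1) / exp v)" .
      then show ?thesis using True by (simp add: indicator_def)
    next
      case False
      then show ?thesis by (cases "v = 0") (auto simp: indicator_def)
    qed
  qed
  also have "\<dots> = ennreal (2 powr b * C) * (\<integral>\<^sup>+v. ennreal (indicator {0..} v * v powr (b - 1) / exp v) \<partial>lborel)"
    by (rule nn_integral_cmult) measurable
  also have "(\<integral>\<^sup>+v. ennreal (indicator {0..} v * v powr (b - 1) / exp v) \<partial>lborel) = ennreal (Gamma b)"
    using Gamma_conv_nn_integral_real[OF b] by simp
  finally show ?thesis using C Gamma_real_pos[OF b] by (simp add: ennreal_mult)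
qed


lemma pk_nonneg:
  assumes fnn: "\<And>t. t \<ge> 0 \<Longrightarrow> 0 \<le> f t" and pnn: "\<And>a b. 0 \<le> pr a b"
  shows "0 \<le> post_kernel f pr y X x"
  using fnn pnn by (auto simp: post_kernel_def split: prod.splits)

lemma ball_M0:
  "(\<integral>\<^sup>+e. ennreal ((e\<bullet>e)^0 * indicator {..1} (e\<bullet>e)) \<partial>(lborel :: (real^'n::finite) measure))
     = ennreal (unit_ball_vol (real CARD('n)))"
proof -
  have "(\<integral>\<^sup>+e. ennreal ((e\<bullet>e)^0 * indicator {..1} (e\<bullet>e)) \<partial>(lborel :: (real^'n::finite) measure))
      = (\<integral>\<^sup>+e. indicator (cball 0 1) e \<partial>(lborel :: (real^'n::finite) measure))"
  proof (rule nn_integral_cong)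
    fix e :: "real^'n"
    have "e \<in> cball 0 1 \<longleftrightarrow> e \<bullet> e \<le> 1"
      by (simp add: norm_eq_sqrt_inner)
    then show "ennreal ((e\<bullet>e)^0 * indicator {..1} (e\<bullet>e)) = indicator (cball 0 1) e"
      by (simp add: indicator_def)
  qed
  also have "\<dots> = emeasure lborel (cball (0::real^'n) 1)" by simp
  also have "\<dots> = ennreal (unit_ball_vol (real CARD('n)))"
    by (subst emeasure_cball) auto
  finally show ?thesis .
qed

lemma sph_M:
  assumes "spherical_error_density f TYPE('n::finite)"
  shows "(\<integral>\<^sup>+e. ennreal ((e\<bullet>e)^0 * f (e\<bullet>e)) \<partial>(lborel :: (real^'n) measure)) = 1"
    and "(\<integral>\<^sup>+e. ennreal ((e\<bullet>e)^1 * f (e\<bullet>e)) \<partial>(lborel :: (real^'n) measure)) = ennreal (real CARD('n))"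
proof -
  note d = assms[unfolded spherical_error_density_def]
  have fnn: "0 \<le> f (e \<bullet> e)" for e :: "real^'n" using d by auto
  have "(\<integral>\<^sup>+e. ennreal ((e\<bullet>e)^0 * f (e\<bullet>e)) \<partial>(lborel :: (real^'n) measure)) = (\<integral>\<^sup>+e. ennreal (f (e\<bullet>e)) \<partial>(lborel :: (real^'n) measure))"
    by simp
  also have "\<dots> = ennreal (\<integral>e. f (e \<bullet> e) \<partial>(lborel :: (real^'n) measure))"
    using d fnn by (intro nn_integral_eq_integral) auto
  also have "\<dots> = 1" using d by simp
  finally show "(\<integral>\<^sup>+e. ennreal ((e\<bullet>e)^0 * f (e\<bullet>e)) \<partial>(lborel :: (real^'n) measure)) = 1" .
  have eq: "(e\<bullet>e)^1 * f (e\<bullet>e) = (\<Sum>i\<in>UNIV. e $ i * e $ i * f (e \<bullet> e))" for e :: "real^'n"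
    by (simp add: inner_vec_def sum_distrib_right)
  have int: "integrable lborel (\<lambda>e::real^'n. (\<Sum>i\<in>UNIV. e $ i * e $ i * f (e \<bullet> e)))"
    by (rule Bochner_Integration.integrable_sum) (use d in blast)
  have "(\<integral>\<^sup>+e. ennreal ((e\<bullet>e)^1 * f (e\<bullet>e)) \<partial>(lborel :: (real^'n) measure))
      = (\<integral>\<^sup>+e. ennreal (\<Sum>i\<in>UNIV. e $ i * e $ i * f (e \<bullet> e)) \<partial>(lborel :: (real^'n) measure))"
    by (simp only: eq)
  also have "\<dots> = ennreal (\<integral>e. (\<Sum>i\<in>UNIV. e $ i * e $ i * f (e \<bullet> e)) \<partial>(lborel :: (real^'n) measure))"
    using int fnn by (intro nn_integral_eq_integral) (auto intro!: sum_nonneg)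
  also have "(\<integral>e. (\<Sum>i\<in>UNIV. e $ i * e $ i * f (e \<bullet> e)) \<partial>(lborel :: (real^'n) measure))
       = (\<Sum>i\<in>UNIV. (\<integral>e. e $ i * e $ i * f (e \<bullet> e) \<partial>(lborel :: (real^'n) measure)))"
    using d by (intro Bochner_Integration.integral_sum) auto
  also have "\<dots> = real CARD('n)" using d by simp
  finally show "(\<integral>\<^sup>+e. ennreal ((e\<bullet>e)^1 * f (e\<bullet>e)) \<partial>(lborel :: (real^'n) measure)) = ennreal (real CARD('n))" .
qed


lemma normal_M:
  assumes N2: "CARD('n::finite) \<ge> 2"
  shows "(\<integral>\<^sup>+e. ennreal ((e\<bullet>e)^1 * normal_generator TYPE('n) (e\<bullet>e)) \<partial>(lborel :: (real^'n) measure))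
       = ennreal (real CARD('n)) * (\<integral>\<^sup>+e. ennreal ((e\<bullet>e)^0 * normal_generator TYPE('n) (e\<bullet>e)) \<partial>(lborel :: (real^'n) measure))"
proof -
  define N where "N = real CARD('n)"
  define g :: "real \<Rightarrow> real" where "g = (\<lambda>t. indicator {..1} t)"
  define phi where "phi = normal_generator TYPE('n)"
  define C where "C = (2 * pi) powr (- N / 2)"
  have phi_eq: "phi t = C * exp (- t / 2)" for t by (simp add: phi_def C_def N_def normal_generator_def)
  have C: "C \<ge> 0" by (simp add: C_def)
  have gm[measurable]: "g \<in> borel_measurable borel" unfolding g_def by measurable
  have phim[measurable]: "phi \<in> borel_measurable borel" unfolding phi_eq[abs_def] by measurable
  have gnn: "\<And>t. t \<ge> 0 \<Longrightarrow> 0 \<le> g t" by (simp add: g_def)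
  have phinn: "\<And>t. t \<ge> 0 \<Longrightarrow> 0 \<le> phi t" using C by (simp add: phi_eq)
  define Qg where "Qg = (\<integral>\<^sup>+s. indicator {0<..} s * ennreal (s powr (- N / 2 - 1 - real (0::nat)) * g (1/s)) \<partial>lborel)"
  define V where "V = ennreal (unit_ball_vol N)"
  have MV: "(\<integral>\<^sup>+e. ennreal ((e\<bullet>e)^0 * g (e\<bullet>e)) \<partial>(lborel :: (real^'n) measure)) = V"
    unfolding g_def V_def N_def by (rule ball_M0)
  have upos: "unit_ball_vol N > 0" by (rule unit_ball_vol_pos) (simp add: N_def)
  have V: "V \<noteq> 0" "V \<noteq> \<infinity>" using upos by (auto simp: V_def)
  define Jg where "Jg = (\<integral>\<^sup>+u. indicator {0<..} u * ennreal (u powr (real (0::nat) + N / 2 - 1) * g u) \<partial>lborel)"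
  have Jg: "Jg \<noteq> 0" "Jg \<noteq> \<infinity>"
  proof -
    have "N / 2 - 1 \<ge> 0" using N2 by (simp add: N_def)
    from J0_bounds[OF this] show "Jg \<noteq> 0" "Jg \<noteq> \<infinity>" by (auto simp: Jg_def g_def)
  qed
  have Tc: "Qg * V = V * Jg"
    using tonelli_gen[OF gm gm gnn gnn, where k=0 and m=0, where 'n='n]
    unfolding Qg_def Jg_def MV[symmetric] N_def by simp
  have QgJ: "Qg = Jg"
  proof -
    have "V * Qg = V * Jg" using Tc by (simp add: mult.commute)
    then show ?thesis using V by (simp add: ennreal_mult_cancel_left)
  qed
  define J where "J = (\<lambda>m::nat. (\<integral>\<^sup>+u. indicator {0<..} u * ennreal (u powr (real m + N / 2 - 1) * phi u) \<partial>lborel))"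
  define M where "M = (\<lambda>m::nat. (\<integral>\<^sup>+e. ennreal ((e\<bullet>e)^m * phi (e\<bullet>e)) \<partial>(lborel :: (real^'n) measure)))"
  have T: "Qg * M m = V * J m" for m
    using tonelli_gen[OF gm phim gnn phinn, where k=0 and m=m, where 'n='n]
    unfolding Qg_def J_def M_def MV[symmetric] N_def by simp
  have Jm: "J m = ennreal (2 powr (real m + N / 2) * C * Gamma (real m + N / 2))" for m
  proof -
    have b: "real m + N / 2 > 0" using N2 by (simp add: N_def add_nonneg_pos)
    have "J m = (\<integral>\<^sup>+u. indicator {0<..} u * ennreal (u powr ((real m + N / 2) - 1) * (C * exp (- u / 2))) \<partial>lborel)"
      by (simp add: J_def phi_eq)
    also have "\<dots> = ennreal (2 powr (real m + N / 2) * C * Gamma (real m + N / 2))"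
      by (rule J_normal[OF b C])
    finally show ?thesis .
  qed
  have J1: "J 1 = ennreal N * J 0"
  proof -
    have Np: "N / 2 > 0" using N2 by (simp add: N_def)
    have "Gamma (N / 2 + 1) = N / 2 * Gamma (N / 2)"
      using Np by (intro Gamma_plus1) (auto elim!: nonpos_Ints_cases)
    then have "2 powr (1 + N / 2) * C * Gamma (1 + N / 2) = N * (2 powr (N / 2) * C * Gamma (N / 2))"
      by (simp add: powr_add add.commute)
    then show ?thesis using Np C by (simp add: Jm ennreal_mult[symmetric])
  qed
  have "Qg * M 1 = V * J 1" by (rule T)
  also have "\<dots> = ennreal N * (V * J 0)" unfolding J1 by (simp add: mult_ac)
  also have "\<dots> = ennreal N * (Qg * M 0)" using T[of 0] by simp
  also have "\<dots> = Qg * (ennreal N * M 0)" by (simp add: mult_ac)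
  finally have "Qg * M 1 = Qg * (ennreal N * M 0)" .
  then have "M 1 = ennreal N * M 0"
    using Jg QgJ by (simp add: ennreal_mult_cancel_left)
  then show ?thesis by (simp add: M_def phi_def N_def)
qed


definition Pk :: "(real \<Rightarrow> real^'p::finite \<Rightarrow> real) \<Rightarrow> real^'n::finite \<Rightarrow> real^'p^'n \<Rightarrow> nat \<Rightarrow> ennreal" where
  "Pk pr y X k = (\<integral>\<^sup>+w. ennreal (pr (fst w) (snd w) * (if (norm (y - fst w *\<^sub>R vec 1 - X *v snd w))\<^sup>2 > 0
              then ((norm (y - fst w *\<^sub>R vec 1 - X *v snd w))\<^sup>2) powr (- real CARD('n) / 2 - real k) else 0)) \<partial>(lborel \<Otimes>\<^sub>M lborel))"

lemma gb_formula:
  fixes f :: "real \<Rightarrow> real" and pr :: "real \<Rightarrow> real^'p::finite \<Rightarrow> real" and y :: "real^'n::finite" and X :: "real^'p^'n"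
  assumes fm[measurable]: "f \<in> borel_measurable borel" and fnn: "\<And>t. t \<ge> 0 \<Longrightarrow> 0 \<le> f t"
    and pnn: "\<And>a b. 0 \<le> pr a b" and pm: "(\<lambda>(a, b). pr a b) \<in> borel_measurable borel"
    and fin: "finite_posterior f pr y X"
    and Mrel: "(\<integral>\<^sup>+e. ennreal ((e\<bullet>e)^1 * f (e\<bullet>e)) \<partial>(lborel :: (real^'n) measure))
       = ennreal (real CARD('n)) * (\<integral>\<^sup>+e. ennreal ((e\<bullet>e)^0 * f (e\<bullet>e)) \<partial>(lborel :: (real^'n) measure))"
    and N2: "CARD('n) \<ge> 2"
  shows "gb_stein f pr y X = enn2real (Pk pr y X 0) / (real CARD('n) * enn2real (Pk pr y X 1))"
proof -
  define N where "N = real CARD('n)"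
  define Q where "Q = (\<lambda>k::nat. (\<integral>\<^sup>+s. indicator {0<..} s * ennreal (s powr (- real CARD('n) / 2 - 1 - real k) * f (1/s)) \<partial>lborel))"
  define M where "M = (\<lambda>k::nat. (\<integral>\<^sup>+e. ennreal ((e\<bullet>e)^k * f (e\<bullet>e)) \<partial>(lborel :: (real^'n) measure)))"
  define g :: "real \<Rightarrow> real" where "g = (\<lambda>t. indicator {..1} t)"
  have gm[measurable]: "g \<in> borel_measurable borel" unfolding g_def by measurable
  have gnn: "\<And>t. t \<ge> 0 \<Longrightarrow> 0 \<le> g t" by (simp add: g_def)
  define V where "V = unit_ball_vol N"
  have Vpos: "V > 0" unfolding V_def by (rule unit_ball_vol_pos) (simp add: N_def)
  have MV: "(\<integral>\<^sup>+e. ennreal ((e\<bullet>e)^0 * g (e\<bullet>e)) \<partial>(lborel :: (real^'n) measure)) = ennreal V"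
    unfolding g_def V_def N_def by (rule ball_M0)
  define J where "J = (\<integral>\<^sup>+u. indicator {0<..} u * ennreal (u powr (real (0::nat) + real CARD('n) / 2 - 1) * g u) \<partial>lborel)"
  have T: "Q k * ennreal V = M k * J" for k
    using tonelli_gen[OF fm gm fnn gnn, where k=k and m=0, where 'n='n]
    unfolding Q_def M_def J_def MV by simp
  define P where "P = Pk pr y X"
  have pk0: "0 \<le> post_kernel f pr y X x" for x by (rule pk_nonneg[OF fnn pnn])
  have intD: "integrable lborel (post_kernel f pr y X)"
    and intN: "integrable lborel (\<lambda>(a, b, s). post_kernel f pr y X (a, b, s) / s)"
    and Dpos: "0 < (\<integral>x. post_kernel f pr y X x \<partial>lborel)"
    using fin by (auto simp: finite_posterior_def)
  have nnD_def: "(\<integral>\<^sup>+x. ennreal (post_kernel f pr y X x / (snd (snd x))^0) \<partial>lborel)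
      = (\<integral>\<^sup>+x. ennreal (post_kernel f pr y X x) \<partial>lborel)" by simp
  have nnN_def: "(\<integral>\<^sup>+x. ennreal (post_kernel f pr y X x / (snd (snd x))^1) \<partial>lborel)
      = (\<integral>\<^sup>+x. ennreal ((\<lambda>(a, b, s). post_kernel f pr y X (a, b, s) / s) x) \<partial>lborel)"
    by (simp add: case_prod_beta')
  have nn_fin: "(\<integral>\<^sup>+x. ennreal (h x) \<partial>lborel) < \<infinity>" if "integrable lborel h" "\<And>x. 0 \<le> h x"
    for h :: "real \<times> (real^'p) \<times> real \<Rightarrow> real"
  proof -
    have "(\<integral>\<^sup>+x. ennreal (norm (h x)) \<partial>lborel) < \<infinity>" using that(1) by (simp add: integrable_iff_bounded)
    then show ?thesis using that(2) by simp
  qed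
  have real_eq: "(\<integral>x. h x \<partial>lborel) = enn2real (\<integral>\<^sup>+x. ennreal (h x) \<partial>lborel)" if "integrable lborel h" "\<And>x. 0 \<le> h x"
    for h :: "real \<times> (real^'p) \<times> real \<Rightarrow> real"
    using that by (intro integral_eq_nn_integral) auto
  have Nnn: "0 \<le> (\<lambda>(a, b, s). post_kernel f pr y X (a, b, s) / s) x" for x
  proof -
    obtain a b s where x: "x = (a, b, s)" by (cases x) auto
    show ?thesis
    proof (cases "s > 0")
      case True then show ?thesis using pk0[of x] by (simp add: x)
    next
      case False then show ?thesis by (simp add: x post_kernel_def)
    qed
  qed
  obtain C0 where C0: "C0 = 0 \<or> C0 = \<infinity>"
    and D0: "(\<integral>\<^sup>+x. ennreal (post_kernel f pr y X x) \<partial>lborel) = Q 0 * P 0 + C0"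
    using post_decomp[OF fm fnn pnn pm, of y X 0] unfolding nnD_def Q_def P_def Pk_def by auto
  obtain C1 where C1: "C1 = 0 \<or> C1 = \<infinity>"
    and D1: "(\<integral>\<^sup>+x. ennreal ((\<lambda>(a, b, s). post_kernel f pr y X (a, b, s) / s) x) \<partial>lborel) = Q 1 * P 1 + C1"
    using post_decomp[OF fm fnn pnn pm, of y X 1] unfolding nnN_def Q_def P_def Pk_def by auto
  have fD: "Q 0 * P 0 + C0 < \<infinity>" using nn_fin[OF intD pk0] D0 by simp
  have fN: "Q 1 * P 1 + C1 < \<infinity>" using nn_fin[OF intN Nnn] D1 by simp
  have C00: "C0 = 0" using C0 fD by auto
  have C10: "C1 = 0" using C1 fN by auto
  define D where "D = (\<integral>x. post_kernel f pr y X x \<partial>lborel)"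
  define Nu where "Nu = (\<integral>(a, b, s). post_kernel f pr y X (a, b, s) / s \<partial>lborel)"
  have Dr: "D = enn2real (Q 0 * P 0)"
    unfolding D_def real_eq[OF intD pk0] D0 C00 by simp
  have Nr: "Nu = enn2real (Q 1 * P 1)"
    unfolding Nu_def real_eq[OF intN Nnn] D1 C10 by simp
  have VD: "V * D = enn2real (M 0) * enn2real J * enn2real (P 0)"
  proof -
    have "V * D = enn2real (ennreal V * (Q 0 * P 0))" using Vpos by (simp add: Dr enn2real_mult)
    also have "ennreal V * (Q 0 * P 0) = (Q 0 * ennreal V) * P 0" by (simp add: mult_ac)
    also have "\<dots> = M 0 * J * P 0" by (simp only: T)
    finally show ?thesis by (simp add: enn2real_mult)
  qed
  have VN: "V * Nu = N * (enn2real (M 0) * enn2real J * enn2real (P 1))"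
  proof -
    have "V * Nu = enn2real (ennreal V * (Q 1 * P 1))" using Vpos by (simp add: Nr enn2real_mult)
    also have "ennreal V * (Q 1 * P 1) = (Q 1 * ennreal V) * P 1" by (simp add: mult_ac)
    also have "\<dots> = M 1 * J * P 1" by (simp only: T)
    also have "M 1 = ennreal N * M 0" using Mrel by (simp add: M_def N_def)
    finally show ?thesis by (simp add: enn2real_mult N_def)
  qed
  define A where "A = enn2real (M 0) * enn2real J"
  have Dp: "D > 0" using Dpos by (simp add: D_def)
  have A0: "A \<noteq> 0" "enn2real (P 0) \<noteq> 0" using VD Dp Vpos by (auto simp: A_def)
  have Np: "N > 0" using N2 by (simp add: N_def)
  have D_eq: "D = A * enn2real (P 0) / V" using VD Vpos by (simp add: A_def field_simps)
  have N_eq: "Nu = N * A * enn2real (P 1) / V" using VN Vpos by (simp add: A_def field_simps)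
  have "gb_stein f pr y X = 1 / (Nu / D)"
    by (simp add: gb_stein_def D_def Nu_def)
  also have "\<dots> = enn2real (P 0) / (N * enn2real (P 1))"
    unfolding D_eq N_eq using A0 Vpos Np by (cases "enn2real (P 1) = 0") (auto simp: field_simps)
  finally show ?thesis by (simp add: P_def N_def)
qed


theorem theorem2p1:
  fixes X :: "real^'p::finite^'n::finite"
    and y :: "real^'n"
    and pr :: "real \<Rightarrow> real^'p \<Rightarrow> real"
    and f g :: "real \<Rightarrow> real"
  assumes centered: "\<forall>i. column i X \<bullet> vec 1 = 0"
    and full_rank: "rank X = CARD('p)"
    and n_gt: "CARD('n) > CARD('p) + 1"
    and prior_nonneg: "\<forall>a b. 0 \<le> pr a b"
    and prior_meas: "(\<lambda>(a, b). pr a b) \<in> borel_measurable borel"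
    and f_dens: "spherical_error_density f TYPE('n)"
    and g_dens: "spherical_error_density g TYPE('n)"
    and fin_f: "finite_posterior f pr y X"
    and fin_g: "finite_posterior g pr y X"
    and fin_normal: "finite_posterior (normal_generator TYPE('n)) pr y X"
  shows "gb_stein f pr y X = gb_stein g pr y X
       \<and> gb_stein f pr y X = gb_stein (normal_generator TYPE('n)) pr y X"
proof -
  have N2: "CARD('n) \<ge> 2" using n_gt by simp
  have pnn: "\<And>a b. 0 \<le> pr a b" using prior_nonneg by simp
  have sph: "gb_stein h pr y X = enn2real (Pk pr y X 0) / (real CARD('n) * enn2real (Pk pr y X 1))"
    if hd: "spherical_error_density h TYPE('n)" and hf: "finite_posterior h pr y X" for h
  proof -
    have hm: "h \<in> borel_measurable borel" and hnn: "\<And>t. t \<ge> 0 \<Longrightarrow> 0 \<le> h t"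
      using hd by (auto simp: spherical_error_density_def)
    have Mrel: "(\<integral>\<^sup>+e. ennreal ((e\<bullet>e)^1 * h (e\<bullet>e)) \<partial>(lborel :: (real^'n) measure))
       = ennreal (real CARD('n)) * (\<integral>\<^sup>+e. ennreal ((e\<bullet>e)^0 * h (e\<bullet>e)) \<partial>(lborel :: (real^'n) measure))"
      using sph_M[OF hd] by simp
    show ?thesis by (rule gb_formula[OF hm hnn pnn prior_meas hf Mrel N2])
  qed
  have nrm: "gb_stein (normal_generator TYPE('n)) pr y X = enn2real (Pk pr y X 0) / (real CARD('n) * enn2real (Pk pr y X 1))"
  proof -
    have hm: "normal_generator TYPE('n) \<in> borel_measurable borel"
      unfolding normal_generator_def by measurable
    have hnn: "\<And>t. t \<ge> 0 \<Longrightarrow> 0 \<le> normal_generator TYPE('n) t"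
      by (simp add: normal_generator_def)
    show ?thesis by (rule gb_formula[OF hm hnn pnn prior_meas fin_normal normal_M[OF N2] N2])
  qed
  show ?thesis using sph[OF f_dens fin_f] sph[OF g_dens fin_g] nrm by simp
qed


end
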